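(* Let $G$ be a 4-dimensional connected Lie group with a global basis $\{X_1,\dots,X_4\}$ of left invariant vector fields satisfying, for real constants $\lambda_1,\dots,\lambda_4$, $[X_1,X_2]=\lambda_1X_1+\lambda_2X_2$, $[X_1,X_3]=\lambda_3X_2-\lambda_1X_4$, $[X_1,X_4]=-\lambda_3X_1-\lambda_2X_4$, $[X_2,X_3]=\lambda_4X_2+\lambda_1X_3$, $[X_2,X_4]=-\lambda_4X_1+\lambda_2X_3$, $[X_3,X_4]=\lambda_3X_3+\lambda_4X_4$, and let $JX_1=X_3$, $JX_2=X_4$, $JX_3=-X_1$, $JX_4=-X_2$, $g(X_1,X_1)=g(X_2,X_2)=-g(X_3,X_3)=-g(X_4,X_4)=1$, $g(X_i,X_j)=0$ for $i\ne j$. Let $\nabla'$ be a natural connection on $(G,J,g)$ with totally skew-symmetric torsion tensor $T$. Then $\nabla'_{X_1}X_1=\nabla'_{X_3}X_3=-\lambda_1X_2-\lambda_3X_4$, $\nabla'_{X_2}X_2=\nabla'_{X_4}X_4=\lambda_2X_1+\lambda_4X_3$, $\nabla'_{X_1}X_2=\nabla'_{X_3}X_4=\lambda_1X_1+\lambda_3X_3$, $\nabla'_{X_1}X_3=-\nabla'_{X_3}X_1=\lambda_3X_2-\lambda_1X_4$, $\nabla'_{X_1}X_4=-\nabla'_{X_3}X_2=-\lambda_3X_1+\lambda_1X_3$, $\nabla'_{X_2}X_1=\nabla'_{X_4}X_3=-\lambda_2X_2-\lambda_4X_4$, $\nabla'_{X_2}X_3=-\nabla'_{X_4}X_1=\lambda_4X_2-\lambda_2X_4$,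 $\nabla'_{X_2}X_4=-\nabla'_{X_4}X_2=-\lambda_4X_1+\lambda_2X_3$, and the components $T_{ijk}=g(T(X_i,X_j),X_k)$ are all zero except those determined by total skew-symmetry from $T_{134}=\lambda_1$, $T_{234}=\lambda_2$, $T_{123}=-\lambda_3$, $T_{124}=-\lambda_4$.
   Context: A linear connection $\nabla'$ on an almost complex manifold with Norden metric $(M,J,g)$ ($J^2=-\mathrm{Id}$, $g(Jx,Jy)=-g(x,y)$) is natural if $\nabla'J=0$ and $\nabla'g=0$. Its torsion is $T(x,y)=\nabla'_xy-\nabla'_yx-[x,y]$, and $T(x,y,z)=g(T(x,y),z)$; the torsion is totally skew-symmetric if $T(x,y,z)$ is a 3-form, i.e. skew-symmetric in every pair of arguments. *)

theory Defs
  imports Complex_Main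
begin

text \<open>Indices of the global left-invariant frame X1,...,X4 of the Lie group G.
  A tangent vector at a point is recorded by its coefficients w.r.t. this frame.\<close>

datatype idx = I1 | I2 | I3 | I4

type_synonym vec = "idx \<Rightarrow> real"

definition mk4 :: "real \<Rightarrow> real \<Rightarrow> real \<Rightarrow> real \<Rightarrow> vec" where
  "mk4 a b c d = (\<lambda>k. case k of I1 \<Rightarrow> a | I2 \<Rightarrow> b | I3 \<Rightarrow> c | I4 \<Rightarrow> d)"

definition X :: "idx \<Rightarrow> vec" where
  "X i = (\<lambda>k. if k = i then 1 else 0)"

definition sum4 :: "(idx \<Rightarrow> real) \<Rightarrow> real" where
  "sum4 f = f I1 + f I2 + f I3 + f I4"

definition Jv :: "vec \<Rightarrow> vec" where
  "Jv v = mk4 (- v I3) (- v I4) (v I1) (v I2)"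

definition gm :: "vec \<Rightarrow> vec \<Rightarrow> real" where
  "gm v w = v I1 * w I1 + v I2 * w I2 - v I3 * w I3 - v I4 * w I4"

definition brk :: "real \<Rightarrow> real \<Rightarrow> real \<Rightarrow> real \<Rightarrow> idx \<Rightarrow> idx \<Rightarrow> vec" where
  "brk l1 l2 l3 l4 i j = (case (i, j) of
      (I1, I2) \<Rightarrow> mk4 l1 l2 0 0
    | (I2, I1) \<Rightarrow> mk4 (- l1) (- l2) 0 0
    | (I1, I3) \<Rightarrow> mk4 0 l3 0 (- l1)
    | (I3, I1) \<Rightarrow> mk4 0 (- l3) 0 l1
    | (I1, I4) \<Rightarrow> mk4 (- l3) 0 0 (- l2)
    | (I4, I1) \<Rightarrow> mk4 l3 0 0 l2
    | (I2, I3) \<Rightarrow> mk4 0 l4 l1 0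
    | (I3, I2) \<Rightarrow> mk4 0 (- l4) (- l1) 0
    | (I2, I4) \<Rightarrow> mk4 (- l4) 0 l2 0
    | (I4, I2) \<Rightarrow> mk4 l4 0 (- l2) 0
    | (I3, I4) \<Rightarrow> mk4 0 0 l3 l4
    | (I4, I3) \<Rightarrow> mk4 0 0 (- l3) (- l4)
    | _ \<Rightarrow> mk4 0 0 0 0)"

text \<open>Bilinear extension of a frame-indexed bilinear operation to coefficient vectors
  (constant-coefficient combinations of the left-invariant frame).\<close>
definition bilin :: "(idx \<Rightarrow> idx \<Rightarrow> vec) \<Rightarrow> vec \<Rightarrow> vec \<Rightarrow> vec" where
  "bilin F a b = (\<lambda>k. sum4 (\<lambda>i. sum4 (\<lambda>j. a i * b j * F i j k)))"

text \<open>A linear connection is given (at each point p of G) by its values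
  nab p i j = coefficients of (\<nabla>'_{X_i} X_j)(p).\<close>
definition nabv :: "('p \<Rightarrow> idx \<Rightarrow> idx \<Rightarrow> vec) \<Rightarrow> 'p \<Rightarrow> vec \<Rightarrow> vec \<Rightarrow> vec" where
  "nabv nab p a b = bilin (nab p) a b"

definition torsion :: "real \<Rightarrow> real \<Rightarrow> real \<Rightarrow> real \<Rightarrow> ('p \<Rightarrow> idx \<Rightarrow> idx \<Rightarrow> vec)
    \<Rightarrow> 'p \<Rightarrow> vec \<Rightarrow> vec \<Rightarrow> vec" where
  "torsion l1 l2 l3 l4 nab p a b =
     (\<lambda>k. nabv nab p a b k - nabv nab p b a k - bilin (brk l1 l2 l3 l4) a b k)"

definition torsion3 :: "real \<Rightarrow> real \<Rightarrow> real \<Rightarrow> real \<Rightarrow> ('p \<Rightarrow> idx \<Rightarrow> idx \<Rightarrow> vec)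
    \<Rightarrow> 'p \<Rightarrow> vec \<Rightarrow> vec \<Rightarrow> vec \<Rightarrow> real" where
  "torsion3 l1 l2 l3 l4 nab p a b c = gm (torsion l1 l2 l3 l4 nab p a b) c"

text \<open>Natural connection: \<nabla>'J = 0 and \<nabla>'g = 0 (tested on constant-coefficient
  fields, which suffices since both are tensors and J, g have constant components).\<close>
definition natural_conn :: "('p \<Rightarrow> idx \<Rightarrow> idx \<Rightarrow> vec) \<Rightarrow> bool" where
  "natural_conn nab \<longleftrightarrow>
     (\<forall>p a b. nabv nab p a (Jv b) = Jv (nabv nab p a b)) \<and>
     (\<forall>p a b c. gm (nabv nab p a b) c + gm b (nabv nab p a c) = 0)"

definition totally_skew_torsion :: "real \<Rightarrow> real \<Rightarrow> real \<Rightarrow> real \<Rightarrow> ('p \<Rightarrow> idx \<Rightarrow> idx \<Rightarrow> vec) \<Rightarrow> bool" where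
  "totally_skew_torsion l1 l2 l3 l4 nab \<longleftrightarrow>
     (\<forall>p a b c. torsion3 l1 l2 l3 l4 nab p a b c = - torsion3 l1 l2 l3 l4 nab p b a c \<and>
                torsion3 l1 l2 l3 l4 nab p a b c = - torsion3 l1 l2 l3 l4 nab p a c b)"

end

theory Submission
  imports Defs
begin


lemma all_idx: "(\<forall>i::idx. P i) \<longleftrightarrow> P I1 \<and> P I2 \<and> P I3 \<and> P I4"
  by (metis idx.exhaust)
lemma ex_fun: "(f::vec) = mk4 a b c d \<longleftrightarrow> f I1 = a \<and> f I2 = b \<and> f I3 = c \<and> f I4 = d"
  by (auto simp: mk4_def fun_eq_iff all_idx)
lemma nabXX: "nabv nab p (X i) (X j) = nab p i j"
  by (cases i; cases j; simp add: nabv_def bilin_def sum4_def X_def)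
lemma JX: "Jv (X I1) = X I3" "Jv (X I2) = X I4" "Jv (X I3) = (\<lambda>k. - X I1 k)" "Jv (X I4) = (\<lambda>k. - X I2 k)"
  by (auto simp: Jv_def X_def mk4_def fun_eq_iff all_idx split: idx.splits)
lemma nab_neg: "nabv nab p a (\<lambda>k. - b k) = (\<lambda>k. - nabv nab p a b k)"
  by (simp add: nabv_def bilin_def sum4_def fun_eq_iff algebra_simps)
lemma Jv_app: "Jv v I1 = - v I3" "Jv v I2 = - v I4" "Jv v I3 = v I1" "Jv v I4 = v I2"
  by (simp_all add: Jv_def mk4_def)
lemma gmX: "gm v (X I1) = v I1" "gm v (X I2) = v I2" "gm v (X I3) = - v I3" "gm v (X I4) = - v I4"
  "gm (X I1) v = v I1" "gm (X I2) v = v I2" "gm (X I3) v = - v I3" "gm (X I4) v = - v I4"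
  by (simp_all add: gm_def X_def)
lemma torsX: "torsion l1 l2 l3 l4 nab p (X i) (X j) = (\<lambda>k. nab p i j k - nab p j i k - brk l1 l2 l3 l4 i j k)"
  unfolding torsion_def nabXX by (cases i; cases j; simp add: bilin_def sum4_def X_def)
lemma brk_app: "brk l1 l2 l3 l4 i j k = (case (i, j) of
      (I1, I2) \<Rightarrow> mk4 l1 l2 0 0
    | (I2, I1) \<Rightarrow> mk4 (- l1) (- l2) 0 0
    | (I1, I3) \<Rightarrow> mk4 0 l3 0 (- l1)
    | (I3, I1) \<Rightarrow> mk4 0 (- l3) 0 l1
    | (I1, I4) \<Rightarrow> mk4 (- l3) 0 0 (- l2)
    | (I4, I1) \<Rightarrow> mk4 l3 0 0 l2
    | (I2, I3) \<Rightarrow> mk4 0 l4 l1 0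
    | (I3, I2) \<Rightarrow> mk4 0 (- l4) (- l1) 0
    | (I2, I4) \<Rightarrow> mk4 (- l4) 0 l2 0
    | (I4, I2) \<Rightarrow> mk4 l4 0 (- l2) 0
    | (I3, I4) \<Rightarrow> mk4 0 0 l3 l4
    | (I4, I3) \<Rightarrow> mk4 0 0 (- l3) (- l4)
    | _ \<Rightarrow> mk4 0 0 0 0) k" by (simp add: brk_def)
lemma mk4_app: "mk4 a b c d I1 = a" "mk4 a b c d I2 = b" "mk4 a b c d I3 = c" "mk4 a b c d I4 = d"
  by (simp_all add: mk4_def)
lemmas H = nabXX JX nab_neg Jv_app gmX torsion3_def torsX brk_app mk4_app

theorem proposition3p5:
  fixes l1 l2 l3 l4 :: real and nab :: "'p \<Rightarrow> idx \<Rightarrow> idx \<Rightarrow> vec"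
  assumes "natural_conn nab"
    and "totally_skew_torsion l1 l2 l3 l4 nab"
  shows "\<forall>p.
      nab p I1 I1 = mk4 0 (- l1) 0 (- l3) \<and> nab p I3 I3 = mk4 0 (- l1) 0 (- l3) \<and>
      nab p I2 I2 = mk4 l2 0 l4 0 \<and> nab p I4 I4 = mk4 l2 0 l4 0 \<and>
      nab p I1 I2 = mk4 l1 0 l3 0 \<and> nab p I3 I4 = mk4 l1 0 l3 0 \<and>
      nab p I1 I3 = mk4 0 l3 0 (- l1) \<and> nab p I3 I1 = mk4 0 (- l3) 0 l1 \<and>
      nab p I1 I4 = mk4 (- l3) 0 l1 0 \<and> nab p I3 I2 = mk4 l3 0 (- l1) 0 \<and>
      nab p I2 I1 = mk4 0 (- l2) 0 (- l4) \<and> nab p I4 I3 = mk4 0 (- l2) 0 (- l4) \<and>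
      nab p I2 I3 = mk4 0 l4 0 (- l2) \<and> nab p I4 I1 = mk4 0 (- l4) 0 l2 \<and>
      nab p I2 I4 = mk4 (- l4) 0 l2 0 \<and> nab p I4 I2 = mk4 l4 0 (- l2) 0 \<and>
      torsion3 l1 l2 l3 l4 nab p (X I1) (X I3) (X I4) = l1 \<and>
      torsion3 l1 l2 l3 l4 nab p (X I2) (X I3) (X I4) = l2 \<and>
      torsion3 l1 l2 l3 l4 nab p (X I1) (X I2) (X I3) = - l3 \<and>
      torsion3 l1 l2 l3 l4 nab p (X I1) (X I2) (X I4) = - l4 \<and>
      (\<forall>i j k. (i = j \<or> j = k \<or> i = k) \<longrightarrow> torsion3 l1 l2 l3 l4 nab p (X i) (X j) (X k) = 0)"
  apply (rule allI)
  subgoal for p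
  proof -
  have EJ: "\<forall>i j k. nabv nab p (X i) (Jv (X j)) k = Jv (nabv nab p (X i) (X j)) k"
    using assms(1) unfolding natural_conn_def by metis
  have EG: "\<forall>i j k. gm (nabv nab p (X i) (X j)) (X k) + gm (X j) (nabv nab p (X i) (X k)) = 0"
    using assms(1) unfolding natural_conn_def by metis
  have ETA: "\<forall>i j k. torsion3 l1 l2 l3 l4 nab p (X i) (X j) (X k) = - torsion3 l1 l2 l3 l4 nab p (X j) (X i) (X k)"
    using assms(2) unfolding totally_skew_torsion_def by blast
  have ETB: "\<forall>i j k. torsion3 l1 l2 l3 l4 nab p (X i) (X j) (X k) = - torsion3 l1 l2 l3 l4 nab p (X i) (X k) (X j)"
    using assms(2) unfolding totally_skew_torsion_def by blast
  have B_0_0_1: "(1) * (nab p I1 I2 I1) + (-1) * (nab p I2 I1 I1) + (-1) * (l1) = (0::real)" using ETB[rule_format, of I1 I1 I2] by (simp add: H; linarith)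
  have B_0_0_3: "(1) * (nab p I1 I4 I1) + (-1) * (nab p I4 I1 I1) + (1) * (l3) = (0::real)" using ETB[rule_format, of I1 I1 I4] by (simp add: H; linarith)
  have B_0_1_1: "(2) * (nab p I1 I2 I2) + (-2) * (nab p I2 I1 I2) + (-2) * (l2) = (0::real)" using ETB[rule_format, of I1 I2 I2] by (simp add: H; linarith)
  have B_0_1_2: "(-1) * (nab p I1 I2 I3) + (1) * (nab p I2 I1 I3) + (1) * (nab p I1 I3 I2) + (-1) * (nab p I3 I1 I2) + (-1) * (l3) = (0::real)" using ETB[rule_format, of I1 I2 I3] by (simp add: H; linarith)
  have B_0_1_3: "(-1) * (nab p I1 I2 I4) + (1) * (nab p I2 I1 I4) + (1) * (nab p I1 I4 I2) + (-1) * (nab p I4 I1 I2) = (0::real)" using ETB[rule_format, of I1 I2 I4] by (simp add: H; linarith)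
  have B_0_2_3: "(-1) * (nab p I1 I3 I4) + (1) * (nab p I3 I1 I4) + (-1) * (l1) + (-1) * (nab p I1 I4 I3) + (1) * (nab p I4 I1 I3) = (0::real)" using ETB[rule_format, of I1 I3 I4] by (simp add: H; linarith)
  have B_0_3_3: "(-2) * (nab p I1 I4 I4) + (2) * (nab p I4 I1 I4) + (-2) * (l2) = (0::real)" using ETB[rule_format, of I1 I4 I4] by (simp add: H; linarith)
  have B_1_0_3: "(-1) * (nab p I2 I1 I4) + (1) * (nab p I1 I2 I4) + (1) * (nab p I2 I4 I1) + (-1) * (nab p I4 I2 I1) + (1) * (l4) = (0::real)" using ETB[rule_format, of I2 I1 I4] by (simp add: H; linarith)
  have G_0_0_0: "(2) * (nab p I1 I1 I1) = (0::real)" using EG[rule_format, of I1 I1 I1] by (simp add: H; linarith)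
  have G_0_0_1: "(1) * (nab p I1 I1 I2) + (1) * (nab p I1 I2 I1) = (0::real)" using EG[rule_format, of I1 I1 I2] by (simp add: H; linarith)
  have G_0_0_2: "(-1) * (nab p I1 I1 I3) + (1) * (nab p I1 I3 I1) = (0::real)" using EG[rule_format, of I1 I1 I3] by (simp add: H; linarith)
  have G_0_0_3: "(-1) * (nab p I1 I1 I4) + (1) * (nab p I1 I4 I1) = (0::real)" using EG[rule_format, of I1 I1 I4] by (simp add: H; linarith)
  have G_0_1_1: "(2) * (nab p I1 I2 I2) = (0::real)" using EG[rule_format, of I1 I2 I2] by (simp add: H; linarith)
  have G_0_1_3: "(-1) * (nab p I1 I2 I4) + (1) * (nab p I1 I4 I2) = (0::real)" using EG[rule_format, of I1 I2 I4] by (simp add: H; linarith)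
  have G_1_0_0: "(2) * (nab p I2 I1 I1) = (0::real)" using EG[rule_format, of I2 I1 I1] by (simp add: H; linarith)
  have G_1_0_1: "(1) * (nab p I2 I1 I2) + (1) * (nab p I2 I2 I1) = (0::real)" using EG[rule_format, of I2 I1 I2] by (simp add: H; linarith)
  have G_1_0_2: "(-1) * (nab p I2 I1 I3) + (1) * (nab p I2 I3 I1) = (0::real)" using EG[rule_format, of I2 I1 I3] by (simp add: H; linarith)
  have G_1_0_3: "(-1) * (nab p I2 I1 I4) + (1) * (nab p I2 I4 I1) = (0::real)" using EG[rule_format, of I2 I1 I4] by (simp add: H; linarith)
  have G_1_1_1: "(2) * (nab p I2 I2 I2) = (0::real)" using EG[rule_format, of I2 I2 I2] by (simp add: H; linarith)
  have G_1_1_3: "(-1) * (nab p I2 I2 I4) + (1) * (nab p I2 I4 I2) = (0::real)" using EG[rule_format, of I2 I2 I4] by (simp add: H; linarith)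
  have G_2_0_0: "(2) * (nab p I3 I1 I1) = (0::real)" using EG[rule_format, of I3 I1 I1] by (simp add: H; linarith)
  have G_2_0_1: "(1) * (nab p I3 I1 I2) + (1) * (nab p I3 I2 I1) = (0::real)" using EG[rule_format, of I3 I1 I2] by (simp add: H; linarith)
  have G_2_0_2: "(-1) * (nab p I3 I1 I3) + (1) * (nab p I3 I3 I1) = (0::real)" using EG[rule_format, of I3 I1 I3] by (simp add: H; linarith)
  have G_2_0_3: "(-1) * (nab p I3 I1 I4) + (1) * (nab p I3 I4 I1) = (0::real)" using EG[rule_format, of I3 I1 I4] by (simp add: H; linarith)
  have G_2_1_1: "(2) * (nab p I3 I2 I2) = (0::real)" using EG[rule_format, of I3 I2 I2] by (simp add: H; linarith)
  have G_2_1_3: "(-1) * (nab p I3 I2 I4) + (1) * (nab p I3 I4 I2) = (0::real)" using EG[rule_format, of I3 I2 I4] by (simp add: H; linarith)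
  have G_3_0_0: "(2) * (nab p I4 I1 I1) = (0::real)" using EG[rule_format, of I4 I1 I1] by (simp add: H; linarith)
  have G_3_0_1: "(1) * (nab p I4 I1 I2) + (1) * (nab p I4 I2 I1) = (0::real)" using EG[rule_format, of I4 I1 I2] by (simp add: H; linarith)
  have G_3_0_2: "(-1) * (nab p I4 I1 I3) + (1) * (nab p I4 I3 I1) = (0::real)" using EG[rule_format, of I4 I1 I3] by (simp add: H; linarith)
  have G_3_0_3: "(-1) * (nab p I4 I1 I4) + (1) * (nab p I4 I4 I1) = (0::real)" using EG[rule_format, of I4 I1 I4] by (simp add: H; linarith)
  have G_3_1_1: "(2) * (nab p I4 I2 I2) = (0::real)" using EG[rule_format, of I4 I2 I2] by (simp add: H; linarith)
  have G_3_1_3: "(-1) * (nab p I4 I2 I4) + (1) * (nab p I4 I4 I2) = (0::real)" using EG[rule_format, of I4 I2 I4] by (simp add: H; linarith)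
  have J_0_0_0: "(1) * (nab p I1 I3 I1) + (1) * (nab p I1 I1 I3) = (0::real)" using EJ[rule_format, of I1 I1 I1] by (simp add: H; linarith)
  have J_0_0_1: "(1) * (nab p I1 I3 I2) + (1) * (nab p I1 I1 I4) = (0::real)" using EJ[rule_format, of I1 I1 I2] by (simp add: H; linarith)
  have J_0_0_2: "(1) * (nab p I1 I3 I3) + (-1) * (nab p I1 I1 I1) = (0::real)" using EJ[rule_format, of I1 I1 I3] by (simp add: H; linarith)
  have J_0_0_3: "(1) * (nab p I1 I3 I4) + (-1) * (nab p I1 I1 I2) = (0::real)" using EJ[rule_format, of I1 I1 I4] by (simp add: H; linarith)
  have J_0_1_0: "(1) * (nab p I1 I4 I1) + (1) * (nab p I1 I2 I3) = (0::real)" using EJ[rule_format, of I1 I2 I1] by (simp add: H; linarith)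
  have J_0_1_1: "(1) * (nab p I1 I4 I2) + (1) * (nab p I1 I2 I4) = (0::real)" using EJ[rule_format, of I1 I2 I2] by (simp add: H; linarith)
  have J_0_1_2: "(1) * (nab p I1 I4 I3) + (-1) * (nab p I1 I2 I1) = (0::real)" using EJ[rule_format, of I1 I2 I3] by (simp add: H; linarith)
  have J_0_1_3: "(1) * (nab p I1 I4 I4) + (-1) * (nab p I1 I2 I2) = (0::real)" using EJ[rule_format, of I1 I2 I4] by (simp add: H; linarith)
  have J_1_0_0: "(1) * (nab p I2 I3 I1) + (1) * (nab p I2 I1 I3) = (0::real)" using EJ[rule_format, of I2 I1 I1] by (simp add: H; linarith)
  have J_1_0_1: "(1) * (nab p I2 I3 I2) + (1) * (nab p I2 I1 I4) = (0::real)" using EJ[rule_format, of I2 I1 I2] by (simp add: H; linarith)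
  have J_1_0_2: "(1) * (nab p I2 I3 I3) + (-1) * (nab p I2 I1 I1) = (0::real)" using EJ[rule_format, of I2 I1 I3] by (simp add: H; linarith)
  have J_1_0_3: "(1) * (nab p I2 I3 I4) + (-1) * (nab p I2 I1 I2) = (0::real)" using EJ[rule_format, of I2 I1 I4] by (simp add: H; linarith)
  have J_1_1_0: "(1) * (nab p I2 I4 I1) + (1) * (nab p I2 I2 I3) = (0::real)" using EJ[rule_format, of I2 I2 I1] by (simp add: H; linarith)
  have J_1_1_1: "(1) * (nab p I2 I4 I2) + (1) * (nab p I2 I2 I4) = (0::real)" using EJ[rule_format, of I2 I2 I2] by (simp add: H; linarith)
  have J_1_1_2: "(1) * (nab p I2 I4 I3) + (-1) * (nab p I2 I2 I1) = (0::real)" using EJ[rule_format, of I2 I2 I3] by (simp add: H; linarith)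
  have J_1_1_3: "(1) * (nab p I2 I4 I4) + (-1) * (nab p I2 I2 I2) = (0::real)" using EJ[rule_format, of I2 I2 I4] by (simp add: H; linarith)
  have J_2_0_0: "(1) * (nab p I3 I3 I1) + (1) * (nab p I3 I1 I3) = (0::real)" using EJ[rule_format, of I3 I1 I1] by (simp add: H; linarith)
  have J_2_0_1: "(1) * (nab p I3 I3 I2) + (1) * (nab p I3 I1 I4) = (0::real)" using EJ[rule_format, of I3 I1 I2] by (simp add: H; linarith)
  have J_2_0_2: "(1) * (nab p I3 I3 I3) + (-1) * (nab p I3 I1 I1) = (0::real)" using EJ[rule_format, of I3 I1 I3] by (simp add: H; linarith)
  have J_2_0_3: "(1) * (nab p I3 I3 I4) + (-1) * (nab p I3 I1 I2) = (0::real)" using EJ[rule_format, of I3 I1 I4] by (simp add: H; linarith)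
  have J_2_1_0: "(1) * (nab p I3 I4 I1) + (1) * (nab p I3 I2 I3) = (0::real)" using EJ[rule_format, of I3 I2 I1] by (simp add: H; linarith)
  have J_2_1_1: "(1) * (nab p I3 I4 I2) + (1) * (nab p I3 I2 I4) = (0::real)" using EJ[rule_format, of I3 I2 I2] by (simp add: H; linarith)
  have J_2_1_2: "(1) * (nab p I3 I4 I3) + (-1) * (nab p I3 I2 I1) = (0::real)" using EJ[rule_format, of I3 I2 I3] by (simp add: H; linarith)
  have J_2_1_3: "(1) * (nab p I3 I4 I4) + (-1) * (nab p I3 I2 I2) = (0::real)" using EJ[rule_format, of I3 I2 I4] by (simp add: H; linarith)
  have J_3_0_0: "(1) * (nab p I4 I3 I1) + (1) * (nab p I4 I1 I3) = (0::real)" using EJ[rule_format, of I4 I1 I1] by (simp add: H; linarith)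
  have J_3_0_1: "(1) * (nab p I4 I3 I2) + (1) * (nab p I4 I1 I4) = (0::real)" using EJ[rule_format, of I4 I1 I2] by (simp add: H; linarith)
  have J_3_0_2: "(1) * (nab p I4 I3 I3) + (-1) * (nab p I4 I1 I1) = (0::real)" using EJ[rule_format, of I4 I1 I3] by (simp add: H; linarith)
  have J_3_0_3: "(1) * (nab p I4 I3 I4) + (-1) * (nab p I4 I1 I2) = (0::real)" using EJ[rule_format, of I4 I1 I4] by (simp add: H; linarith)
  have J_3_1_0: "(1) * (nab p I4 I4 I1) + (1) * (nab p I4 I2 I3) = (0::real)" using EJ[rule_format, of I4 I2 I1] by (simp add: H; linarith)
  have J_3_1_1: "(1) * (nab p I4 I4 I2) + (1) * (nab p I4 I2 I4) = (0::real)" using EJ[rule_format, of I4 I2 I2] by (simp add: H; linarith)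
  have J_3_1_2: "(1) * (nab p I4 I4 I3) + (-1) * (nab p I4 I2 I1) = (0::real)" using EJ[rule_format, of I4 I2 I3] by (simp add: H; linarith)
  have J_3_1_3: "(1) * (nab p I4 I4 I4) + (-1) * (nab p I4 I2 I2) = (0::real)" using EJ[rule_format, of I4 I2 I4] by (simp add: H; linarith)
  have c_0_0_0: "nab p I1 I1 I1 = 0" using G_0_0_0 by linarith
  have c_0_0_1: "nab p I1 I1 I2 = (-1) * (l1)" using G_0_0_1 B_0_0_1 G_1_0_0 by linarith
  have c_0_0_2: "nab p I1 I1 I3 = 0" using G_0_0_2 J_0_0_0 by linarith
  have c_0_0_3: "nab p I1 I1 I4 = (-1) * (l3)" using G_0_0_3 B_0_0_3 G_3_0_0 by linarith
  have v_0_0: "nab p I1 I1 = mk4 (0) ((-1) * (l1)) (0) ((-1) * (l3))" unfolding ex_fun using c_0_0_0 c_0_0_1 c_0_0_2 c_0_0_3 by simp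
  have c_0_1_0: "nab p I1 I2 I1 = (1) * (l1)" using B_0_0_1 G_1_0_0 by linarith
  have c_0_1_1: "nab p I1 I2 I2 = 0" using G_0_1_1 by linarith
  have c_0_1_2: "nab p I1 I2 I3 = (1) * (l3)" using B_0_0_3 J_0_1_0 G_3_0_0 by linarith
  have c_0_1_3: "nab p I1 I2 I4 = 0" using G_0_1_3 J_0_1_1 by linarith
  have v_0_1: "nab p I1 I2 = mk4 ((1) * (l1)) (0) ((1) * (l3)) (0)" unfolding ex_fun using c_0_1_0 c_0_1_1 c_0_1_2 c_0_1_3 by simp
  have c_0_2_0: "nab p I1 I3 I1 = 0" using J_0_0_0 G_0_0_2 by linarith
  have c_0_2_1: "nab p I1 I3 I2 = (1) * (l3)" using J_0_0_1 G_0_0_3 B_0_0_3 G_3_0_0 by linarith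
  have c_0_2_2: "nab p I1 I3 I3 = 0" using J_0_0_2 G_0_0_0 by linarith
  have c_0_2_3: "nab p I1 I3 I4 = (-1) * (l1)" using J_0_0_3 G_0_0_1 B_0_0_1 G_1_0_0 by linarith
  have v_0_2: "nab p I1 I3 = mk4 (0) ((1) * (l3)) (0) ((-1) * (l1))" unfolding ex_fun using c_0_2_0 c_0_2_1 c_0_2_2 c_0_2_3 by simp
  have c_0_3_0: "nab p I1 I4 I1 = (-1) * (l3)" using B_0_0_3 G_3_0_0 by linarith
  have c_0_3_1: "nab p I1 I4 I2 = 0" using J_0_1_1 G_0_1_3 by linarith
  have c_0_3_2: "nab p I1 I4 I3 = (1) * (l1)" using J_0_1_2 B_0_0_1 G_1_0_0 by linarith
  have c_0_3_3: "nab p I1 I4 I4 = 0" using J_0_1_3 G_0_1_1 by linarith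
  have v_0_3: "nab p I1 I4 = mk4 ((-1) * (l3)) (0) ((1) * (l1)) (0)" unfolding ex_fun using c_0_3_0 c_0_3_1 c_0_3_2 c_0_3_3 by simp
  have c_1_0_0: "nab p I2 I1 I1 = 0" using G_1_0_0 by linarith
  have c_1_0_1: "nab p I2 I1 I2 = (-1) * (l2)" using B_0_1_1 G_0_1_1 by linarith
  have c_1_0_2: "nab p I2 I1 I3 = 0" using G_1_0_2 J_1_0_0 by linarith
  have c_1_0_3: "nab p I2 I1 I4 = (-1) * (l4)" using B_0_1_3 G_0_1_3 G_3_0_1 B_1_0_3 J_0_1_1 G_1_0_3 by linarith
  have v_1_0: "nab p I2 I1 = mk4 (0) ((-1) * (l2)) (0) ((-1) * (l4))" unfolding ex_fun using c_1_0_0 c_1_0_1 c_1_0_2 c_1_0_3 by simp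
  have c_1_1_0: "nab p I2 I2 I1 = (1) * (l2)" using B_0_1_1 G_0_1_1 G_1_0_1 by linarith
  have c_1_1_1: "nab p I2 I2 I2 = 0" using G_1_1_1 by linarith
  have c_1_1_2: "nab p I2 I2 I3 = (1) * (l4)" using B_0_1_3 G_0_1_3 J_1_1_0 G_3_0_1 B_1_0_3 J_0_1_1 by linarith
  have c_1_1_3: "nab p I2 I2 I4 = 0" using G_1_1_3 J_1_1_1 by linarith
  have v_1_1: "nab p I2 I2 = mk4 ((1) * (l2)) (0) ((1) * (l4)) (0)" unfolding ex_fun using c_1_1_0 c_1_1_1 c_1_1_2 c_1_1_3 by simp
  have c_1_2_0: "nab p I2 I3 I1 = 0" using J_1_0_0 G_1_0_2 by linarith
  have c_1_2_1: "nab p I2 I3 I2 = (1) * (l4)" using J_1_0_1 B_0_1_3 G_0_1_3 G_3_0_1 B_1_0_3 J_0_1_1 G_1_0_3 by linarith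
  have c_1_2_2: "nab p I2 I3 I3 = 0" using J_1_0_2 G_1_0_0 by linarith
  have c_1_2_3: "nab p I2 I3 I4 = (-1) * (l2)" using J_1_0_3 B_0_1_1 G_0_1_1 by linarith
  have v_1_2: "nab p I2 I3 = mk4 (0) ((1) * (l4)) (0) ((-1) * (l2))" unfolding ex_fun using c_1_2_0 c_1_2_1 c_1_2_2 c_1_2_3 by simp
  have c_1_3_0: "nab p I2 I4 I1 = (-1) * (l4)" using B_0_1_3 G_0_1_3 G_3_0_1 B_1_0_3 J_0_1_1 by linarith
  have c_1_3_1: "nab p I2 I4 I2 = 0" using J_1_1_1 G_1_1_3 by linarith
  have c_1_3_2: "nab p I2 I4 I3 = (1) * (l2)" using J_1_1_2 B_0_1_1 G_0_1_1 G_1_0_1 by linarith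
  have c_1_3_3: "nab p I2 I4 I4 = 0" using J_1_1_3 G_1_1_1 by linarith
  have v_1_3: "nab p I2 I4 = mk4 ((-1) * (l4)) (0) ((1) * (l2)) (0)" unfolding ex_fun using c_1_3_0 c_1_3_1 c_1_3_2 c_1_3_3 by simp
  have c_2_0_0: "nab p I3 I1 I1 = 0" using G_2_0_0 by linarith
  have c_2_0_1: "nab p I3 I1 I2 = (-1) * (l3)" using B_0_1_2 J_0_0_1 G_0_0_3 G_1_0_2 J_1_0_0 J_0_1_0 by linarith
  have c_2_0_2: "nab p I3 I1 I3 = 0" using G_2_0_2 J_2_0_0 by linarith
  have c_2_0_3: "nab p I3 I1 I4 = (1) * (l1)" using B_0_2_3 J_0_0_3 G_0_0_1 J_0_1_2 G_3_0_2 J_3_0_0 by linarith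
  have v_2_0: "nab p I3 I1 = mk4 (0) ((-1) * (l3)) (0) ((1) * (l1))" unfolding ex_fun using c_2_0_0 c_2_0_1 c_2_0_2 c_2_0_3 by simp
  have c_2_1_0: "nab p I3 I2 I1 = (1) * (l3)" using B_0_1_2 J_0_0_1 G_0_0_3 G_1_0_2 J_1_0_0 G_2_0_1 J_0_1_0 by linarith
  have c_2_1_1: "nab p I3 I2 I2 = 0" using G_2_1_1 by linarith
  have c_2_1_2: "nab p I3 I2 I3 = (-1) * (l1)" using B_0_2_3 J_0_0_3 G_0_0_1 J_0_1_2 G_2_0_3 J_2_1_0 G_3_0_2 J_3_0_0 by linarith
  have c_2_1_3: "nab p I3 I2 I4 = 0" using G_2_1_3 J_2_1_1 by linarith
  have v_2_1: "nab p I3 I2 = mk4 ((1) * (l3)) (0) ((-1) * (l1)) (0)" unfolding ex_fun using c_2_1_0 c_2_1_1 c_2_1_2 c_2_1_3 by simp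
  have c_2_2_0: "nab p I3 I3 I1 = 0" using J_2_0_0 G_2_0_2 by linarith
  have c_2_2_1: "nab p I3 I3 I2 = (-1) * (l1)" using J_2_0_1 B_0_2_3 J_0_0_3 G_0_0_1 J_0_1_2 G_3_0_2 J_3_0_0 by linarith
  have c_2_2_2: "nab p I3 I3 I3 = 0" using J_2_0_2 G_2_0_0 by linarith
  have c_2_2_3: "nab p I3 I3 I4 = (-1) * (l3)" using J_2_0_3 B_0_1_2 J_0_0_1 G_0_0_3 G_1_0_2 J_1_0_0 J_0_1_0 by linarith
  have v_2_2: "nab p I3 I3 = mk4 (0) ((-1) * (l1)) (0) ((-1) * (l3))" unfolding ex_fun using c_2_2_0 c_2_2_1 c_2_2_2 c_2_2_3 by simp
  have c_2_3_0: "nab p I3 I4 I1 = (1) * (l1)" using B_0_2_3 J_0_0_3 G_0_0_1 J_0_1_2 G_2_0_3 G_3_0_2 J_3_0_0 by linarith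
  have c_2_3_1: "nab p I3 I4 I2 = 0" using J_2_1_1 G_2_1_3 by linarith
  have c_2_3_2: "nab p I3 I4 I3 = (1) * (l3)" using J_2_1_2 B_0_1_2 J_0_0_1 G_0_0_3 G_1_0_2 J_1_0_0 G_2_0_1 J_0_1_0 by linarith
  have c_2_3_3: "nab p I3 I4 I4 = 0" using J_2_1_3 G_2_1_1 by linarith
  have v_2_3: "nab p I3 I4 = mk4 ((1) * (l1)) (0) ((1) * (l3)) (0)" unfolding ex_fun using c_2_3_0 c_2_3_1 c_2_3_2 c_2_3_3 by simp
  have c_3_0_0: "nab p I4 I1 I1 = 0" using G_3_0_0 by linarith
  have c_3_0_1: "nab p I4 I1 I2 = (-1) * (l4)" using G_3_0_1 B_1_0_3 G_0_1_3 J_0_1_1 G_1_0_3 by linarith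
  have c_3_0_2: "nab p I4 I1 I3 = 0" using G_3_0_2 J_3_0_0 by linarith
  have c_3_0_3: "nab p I4 I1 I4 = (1) * (l2)" using B_0_3_3 J_0_1_3 G_0_1_1 by linarith
  have v_3_0: "nab p I4 I1 = mk4 (0) ((-1) * (l4)) (0) ((1) * (l2))" unfolding ex_fun using c_3_0_0 c_3_0_1 c_3_0_2 c_3_0_3 by simp
  have c_3_1_0: "nab p I4 I2 I1 = (1) * (l4)" using B_1_0_3 G_0_1_3 J_0_1_1 G_1_0_3 by linarith
  have c_3_1_1: "nab p I4 I2 I2 = 0" using G_3_1_1 by linarith
  have c_3_1_2: "nab p I4 I2 I3 = (-1) * (l2)" using B_0_3_3 J_0_1_3 G_0_1_1 G_3_0_3 J_3_1_0 by linarith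
  have c_3_1_3: "nab p I4 I2 I4 = 0" using G_3_1_3 J_3_1_1 by linarith
  have v_3_1: "nab p I4 I2 = mk4 ((1) * (l4)) (0) ((-1) * (l2)) (0)" unfolding ex_fun using c_3_1_0 c_3_1_1 c_3_1_2 c_3_1_3 by simp
  have c_3_2_0: "nab p I4 I3 I1 = 0" using J_3_0_0 G_3_0_2 by linarith
  have c_3_2_1: "nab p I4 I3 I2 = (-1) * (l2)" using J_3_0_1 B_0_3_3 J_0_1_3 G_0_1_1 by linarith
  have c_3_2_2: "nab p I4 I3 I3 = 0" using J_3_0_2 G_3_0_0 by linarith
  have c_3_2_3: "nab p I4 I3 I4 = (-1) * (l4)" using J_3_0_3 G_3_0_1 B_1_0_3 G_0_1_3 J_0_1_1 G_1_0_3 by linarith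
  have v_3_2: "nab p I4 I3 = mk4 (0) ((-1) * (l2)) (0) ((-1) * (l4))" unfolding ex_fun using c_3_2_0 c_3_2_1 c_3_2_2 c_3_2_3 by simp
  have c_3_3_0: "nab p I4 I4 I1 = (1) * (l2)" using B_0_3_3 J_0_1_3 G_0_1_1 G_3_0_3 by linarith
  have c_3_3_1: "nab p I4 I4 I2 = 0" using J_3_1_1 G_3_1_3 by linarith
  have c_3_3_2: "nab p I4 I4 I3 = (1) * (l4)" using J_3_1_2 B_1_0_3 G_0_1_3 J_0_1_1 G_1_0_3 by linarith
  have c_3_3_3: "nab p I4 I4 I4 = 0" using J_3_1_3 G_3_1_1 by linarith
  have v_3_3: "nab p I4 I4 = mk4 ((1) * (l2)) (0) ((1) * (l4)) (0)" unfolding ex_fun using c_3_3_0 c_3_3_1 c_3_3_2 c_3_3_3 by simp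
  note V = v_0_0 v_0_1 v_0_2 v_0_3 v_1_0 v_1_1 v_1_2 v_1_3 v_2_0 v_2_1 v_2_2 v_2_3 v_3_0 v_3_1 v_3_2 v_3_3
  show ?thesis
    unfolding all_idx by (simp add: V torsion3_def torsX gmX brk_def mk4_def)
  qed
  done

end
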